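(* Let $n\ge4$ be even and $\alpha_n=\frac{\log(5n-6)}{\log n}$. There exists $C_n>1$ such that for every choice function $\eta$, every $x\in K^\eta$ and every $r\in(0,1/n)$, \[C_n^{-1}r^{\alpha_n}\le\mathcal{H}^{\alpha_n}(K^\eta\cap B(x,r))\le C_nr^{\alpha_n}.\]
   Context: Let $\mathcal{A}_n=\{1,\dots,5n-6\}$, $\mathcal{A}_n^m$ the words of length $m$ ($\mathcal{A}_n^0=\{\varepsilon\}$), $\mathcal{A}_n^*=\bigcup_{m\ge0}\mathcal{A}_n^m$. Define maps $\psi^1_{n,j},\psi^2_{n,j}:\mathbb{R}^2\to\mathbb{R}^2$, $j\in\mathcal{A}_n$, each of the form $x\mapsto\frac1nx+b$: for $j=1,\dots,4n-4$, $\psi^1_{n,j}=\psi^2_{n,j}$ map $[0,1]^2$ onto the $4n-4$ squares of the grid of $n^2$ closed squares of side $1/n$ in $[0,1]^2$ meeting $\partial[0,1]^2$ (fixed enumeration); for $j=4n-3+i$, $i=0,\dots,\frac n2-2$, $\psi^1_{n,j}(x)=\psi^2_{n,j}(x)=\frac1nx+(\frac12+\frac in,\frac1n)$; for $j=4n+\frac n2-4+i$, $i=0,\dots,\frac n2-2$, $\psi^1_{n,j}(x)=\frac1nx+(\frac{i+1}n,\frac2n)$, $\psi^2_{n,j}(x)=\frac1nx+(\frac{i+1}n,\frac1n)$. A choice function is any $\eta:\mathcal{A}_n^*\to\{1,2\}$. Set $\phi^\eta_\varepsilon=\mathrm{id}$ and $\phi^\eta_w=\psi^{\eta(\varepsilon)}_{n,i_1}\circ\psi^{\eta(i_1)}_{n,i_2}\circ\cdots\circ\psi^{\eta(i_1\cdots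 i_{m-1})}_{n,i_m}$ for $w=i_1\cdots i_m$. Then $K^\eta=\bigcap_{m\ge0}\bigcup_{w\in\mathcal{A}_n^m}\phi^\eta_w([0,1]^2)$. *)

theory Defs
  imports "HOL-Analysis.Analysis"
begin

definition hausdorff_pre :: "real \<Rightarrow> real \<Rightarrow> 'a::metric_space set \<Rightarrow> ennreal" where
  "hausdorff_pre s \<delta> A =
     (INF U \<in> {U :: nat \<Rightarrow> 'a set. A \<subseteq> (\<Union>i. U i) \<and> (\<forall>i. bounded (U i) \<and> diameter (U i) \<le> \<delta>)}.
        (\<Sum>i. ennreal (diameter (U i) powr s)))"

definition hausdorff_measure :: "real \<Rightarrow> 'a::metric_space set \<Rightarrow> ennreal" where
  "hausdorff_measure s A = (SUP \<delta> \<in> {0<..}. hausdorff_pre s \<delta> A)"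

definition alphabet :: "nat \<Rightarrow> nat set" where
  "alphabet n = {1..5*n-6}"

text \<open>Grid indices (a,b) of the squares [a/n,(a+1)/n] x [b/n,(b+1)/n] meeting the boundary of the unit square.\<close>
definition boundary_cells :: "nat \<Rightarrow> (nat \<times> nat) set" where
  "boundary_cells n = {(a,b). a < n \<and> b < n \<and> (a = 0 \<or> a = n - 1 \<or> b = 0 \<or> b = n - 1)}"

text \<open>Translation part of psi^k_{n,j}; e is the fixed enumeration of the boundary squares.\<close>
definition psi_off :: "nat \<Rightarrow> (nat \<Rightarrow> nat \<times> nat) \<Rightarrow> nat \<Rightarrow> nat \<Rightarrow> real \<times> real" where
  "psi_off n e k j =
     (if j \<le> 4*n - 4 then (real (fst (e j)) / real n, real (snd (e j)) / real n)
      else if j \<le> 4*n + n div 2 - 5 then (1/2 + real (j - (4*n - 3)) / real n, 1 / real n)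
      else (real (j - (4*n + n div 2 - 4) + 1) / real n, if k = 1 then 2 / real n else 1 / real n))"

definition psi :: "nat \<Rightarrow> (nat \<Rightarrow> nat \<times> nat) \<Rightarrow> nat \<Rightarrow> nat \<Rightarrow> real \<times> real \<Rightarrow> real \<times> real" where
  "psi n e k j x = (1 / real n) *\<^sub>R x + psi_off n e k j"

text \<open>phi^eta_w = psi^{eta(eps)}_{i1} o psi^{eta(i1)}_{i2} o ... o psi^{eta(i1...i_{m-1})}_{im}.\<close>
definition phi :: "nat \<Rightarrow> (nat \<Rightarrow> nat \<times> nat) \<Rightarrow> (nat list \<Rightarrow> nat) \<Rightarrow> nat list \<Rightarrow> real \<times> real \<Rightarrow> real \<times> real" where
  "phi n e \<eta> w = foldr (\<circ>) (map (\<lambda>k. psi n e (\<eta> (take k w)) (w ! k)) [0..<length w]) id"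

definition choice_fun :: "nat \<Rightarrow> (nat list \<Rightarrow> nat) \<Rightarrow> bool" where
  "choice_fun n \<eta> \<longleftrightarrow> (\<forall>w \<in> lists (alphabet n). \<eta> w \<in> {1,2})"

definition unit_square :: "(real \<times> real) set" where
  "unit_square = {0..1} \<times> {0..1}"

definition K :: "nat \<Rightarrow> (nat \<Rightarrow> nat \<times> nat) \<Rightarrow> (nat list \<Rightarrow> nat) \<Rightarrow> (real \<times> real) set" where
  "K n e \<eta> = (\<Inter>m. \<Union>w \<in> {w \<in> lists (alphabet n). length w = m}. phi n e \<eta> w ` unit_square)"

definition alpha :: "nat \<Rightarrow> real" where
  "alpha n = ln (real (5*n - 6)) / ln (real n)"

end

theory Submission
  imports Defs
begin


lemma foldr_comp_id: "foldr (\<circ>) fs g = foldr (\<circ>) fs id \<circ> g"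
  by (induction fs) (auto simp: comp_assoc)

lemma phi_Nil: "phi n e \<eta> [] = id" by (simp add: phi_def)

lemma phi_snoc: "phi n e \<eta> (w @ [j]) = phi n e \<eta> w \<circ> psi n e (\<eta> w) j"
proof -
  define F where "F = (\<lambda>k. psi n e (\<eta> (take k (w@[j]))) ((w@[j]) ! k))"
  define F' where "F' = (\<lambda>k. psi n e (\<eta> (take k w)) (w ! k))"
  have 1: "map F [0..<length (w@[j])] = map F [0..<length w] @ [F (length w)]" by simp
  have 2: "map F [0..<length w] = map F' [0..<length w]"
    by (rule map_cong) (auto simp: nth_append F_def F'_def)
  have 3: "F (length w) = psi n e (\<eta> w) j" by (simp add: F_def)
  show ?thesis unfolding phi_def F_def[symmetric] F'_def[symmetric] 1 2 3
    by (simp add: foldr_comp_id[of _ "psi n e (\<eta> w) j"])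
qed

definition Dg :: "nat \<Rightarrow> (nat \<Rightarrow> nat \<times> nat) \<Rightarrow> nat \<Rightarrow> nat \<Rightarrow> nat \<times> nat" where
  "Dg n e k j = (if j \<le> 4*n - 4 then e j
      else if j \<le> 4*n + n div 2 - 5 then (n div 2 + (j - (4*n - 3)), 1)
      else (j - (4*n + n div 2 - 4) + 1, if k = 1 then 2 else 1))"

primrec Gaux :: "nat \<Rightarrow> (nat\<Rightarrow>nat\<times>nat) \<Rightarrow> (nat list \<Rightarrow> nat) \<Rightarrow> nat list \<Rightarrow> nat \<Rightarrow> nat \<times> nat" where
  "Gaux n e \<eta> w 0 = (0,0)"
| "Gaux n e \<eta> w (Suc k) = (n * fst (Gaux n e \<eta> w k) + fst (Dg n e (\<eta> (take k w)) (w!k)),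
                             n * snd (Gaux n e \<eta> w k) + snd (Dg n e (\<eta> (take k w)) (w!k)))"

definition G where "G n e \<eta> w = Gaux n e \<eta> w (length w)"

lemma Gaux_append: "k \<le> length w \<Longrightarrow> Gaux n e \<eta> (w@v) k = Gaux n e \<eta> w k"
  by (induction k) (auto simp: nth_append)

lemma G_Nil: "G n e \<eta> [] = (0,0)" by (simp add: G_def)

lemma G_snoc: "G n e \<eta> (w@[j]) = (n * fst (G n e \<eta> w) + fst (Dg n e (\<eta> w) j),
                                    n * snd (G n e \<eta> w) + snd (Dg n e (\<eta> w) j))"
  by (simp add: G_def Gaux_append)

definition cell where "cell n e \<eta> w = phi n e \<eta> w ` unit_square"

definition lv :: "nat \<Rightarrow> nat \<Rightarrow> nat list set" where
  "lv n m = {w. set w \<subseteq> alphabet n \<and> length w = m}"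

lemma finite_alphabet: "finite (alphabet n)" by (simp add: alphabet_def)

lemma card_lv: "card (lv n m) = (5*n-6) ^ m"
  unfolding lv_def by (simp add: card_lists_length_eq finite_alphabet alphabet_def)

lemma finite_lv: "finite (lv n m)"
  unfolding lv_def by (simp add: finite_lists_length_eq finite_alphabet)

lemma K_lv: "K n e \<eta> = (\<Inter>m. \<Union>w \<in> lv n m. cell n e \<eta> w)"
proof -
  have "{w \<in> lists (alphabet n). length w = m} = lv n m" for m by (auto simp: lv_def)
  then show ?thesis by (simp add: K_def cell_def)
qed



lemma pow_powr: "0 < (x::real) \<Longrightarrow> (x ^ k) powr a = (x powr a) ^ k"
  by (induction k) (auto simp: powr_mult)

lemma pre_le_finite:
  assumes F: "finite F" and A: "A \<subseteq> (\<Union>u\<in>F. f u)" and b: "\<forall>u\<in>F. bounded (f u) \<and> diameter (f u) \<le> \<delta>"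
    and d: "0 \<le> \<delta>"
  shows "hausdorff_pre s \<delta> A \<le> ennreal (\<Sum>u\<in>F. diameter (f u) powr s)"
proof -
  obtain xs where xs: "set xs = F" "distinct xs" using finite_distinct_list[OF F] by blast
  define U where "U = (\<lambda>i. if i < length xs then f (xs ! i) else {})"
  have "U \<in> {U. A \<subseteq> (\<Union>i. U i) \<and> (\<forall>i. bounded (U i) \<and> diameter (U i) \<le> \<delta>)}"
  proof -
    have "A \<subseteq> (\<Union>i. U i)"
    proof
      fix y assume "y \<in> A"
      then obtain u where u: "u \<in> F" "y \<in> f u" using A by blast
      then obtain i where "i < length xs" "xs ! i = u" using xs by (metis in_set_conv_nth)
      then show "y \<in> (\<Union>i. U i)" using u by (auto simp: U_def)
    qed
    moreover have "bounded (U i) \<and> diameter (U i) \<le> \<delta>" for i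
      using b xs d by (auto simp: U_def)
    ultimately show ?thesis by blast
  qed
  then have "hausdorff_pre s \<delta> A \<le> (\<Sum>i. ennreal (diameter (U i) powr s))"
    unfolding hausdorff_pre_def by (rule INF_lower)
  also have "(\<Sum>i. ennreal (diameter (U i) powr s)) = (\<Sum>i<length xs. ennreal (diameter (U i) powr s))"
    by (rule suminf_finite) (auto simp: U_def)
  also have "\<dots> = ennreal (\<Sum>i<length xs. diameter (U i) powr s)"
    by (rule sum_ennreal) simp
  also have "(\<Sum>i<length xs. diameter (U i) powr s) = (\<Sum>i<length xs. diameter (f (xs!i)) powr s)"
    by (rule sum.cong) (auto simp: U_def)
  also have "\<dots> = sum_list (map (\<lambda>u. diameter (f u) powr s) xs)"
    by (simp add: sum_list_sum_nth atLeast0LessThan)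
  also have "\<dots> = (\<Sum>u\<in>F. diameter (f u) powr s)"
    using xs by (simp add: sum_list_distinct_conv_sum_set)
  finally show ?thesis .
qed

lemma pre_lower:
  assumes "\<And>U. A \<subseteq> (\<Union>i. U i) \<Longrightarrow> (\<forall>i. bounded (U i) \<and> diameter (U i) \<le> \<delta>) \<Longrightarrow>
             c \<le> (\<Sum>i. ennreal (diameter (U i) powr s))"
  shows "c \<le> hausdorff_pre s \<delta> A"
  unfolding hausdorff_pre_def using assms by (auto intro!: INF_greatest)

lemma hm_ge: "0 < \<delta> \<Longrightarrow> hausdorff_pre s \<delta> A \<le> hausdorff_measure s A"
  unfolding hausdorff_measure_def by (rule SUP_upper) simp

lemma hm_le: "(\<And>\<delta>. 0 < \<delta> \<Longrightarrow> hausdorff_pre s \<delta> A \<le> c) \<Longrightarrow> hausdorff_measure s A \<le> c"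
  unfolding hausdorff_measure_def by (rule SUP_least) simp

lemma geo_sum: "(\<Sum>i<I. (1::real) / 2 ^ Suc i) = 1 - 1 / 2 ^ I"
  by (induction I) (auto simp: field_simps)

context
  fixes n :: nat and e :: "nat \<Rightarrow> nat \<times> nat"
  assumes n4: "n \<ge> 4" and ev: "even n" and eb: "bij_betw e {1..4*n-4} (boundary_cells n)"
begin

lemma psi_off_Dg: "psi_off n e k j = (real (fst (Dg n e k j)) / real n, real (snd (Dg n e k j)) / real n)"
proof -
  obtain h where h: "n = 2*h" using ev by blast
  have "real (n div 2) = real n / 2" using h by simp
  then show ?thesis using n4 unfolding psi_off_def Dg_def
    by (auto simp: field_simps)
qed

lemma e_bc: "j \<in> {1..4*n-4} \<Longrightarrow> e j \<in> boundary_cells n"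
  using eb by (auto simp: bij_betw_def)

lemma Dg_lt: "j \<in> alphabet n \<Longrightarrow> fst (Dg n e k j) < n \<and> snd (Dg n e k j) < n"
proof -
  assume j: "j \<in> alphabet n"
  obtain h where h: "n = 2*h" using ev by blast
  show ?thesis
  proof (cases "j \<le> 4*n-4")
    case True
    then have "e j \<in> boundary_cells n" using j by (intro e_bc) (auto simp: alphabet_def)
    then show ?thesis using True by (auto simp: Dg_def boundary_cells_def)
  next
    case False
    then show ?thesis using j h n4 by (auto simp: Dg_def alphabet_def)
  qed
qed

lemma Dg_inj: "inj_on (Dg n e k) (alphabet n)"
proof
  fix i j assume i: "i \<in> alphabet n" and j: "j \<in> alphabet n" and eq: "Dg n e k i = Dg n e k j"
  obtain h where h: "n = 2*h" using ev by blast
  have hd: "n div 2 = h" using h by simp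
  have nb: "p \<notin> boundary_cells n" if "1 \<le> fst p" "fst p \<le> n - 2" "1 \<le> snd p" "snd p \<le> n-2" for p
    using that n4 by (auto simp: boundary_cells_def)
  consider "i \<le> 4*n-4" "j \<le> 4*n-4" | "i \<le> 4*n-4" "\<not> j \<le> 4*n-4" | "\<not> i \<le> 4*n-4" "j \<le> 4*n-4"
    | "\<not> i \<le> 4*n-4" "\<not> j \<le> 4*n-4" by blast
  then show "i = j"
  proof cases
    case 1
    then show ?thesis using eq i j eb by (auto simp: Dg_def alphabet_def bij_betw_def inj_on_def)
  next
    case 2
    have "e i \<in> boundary_cells n" using i 2 by (intro e_bc) (auto simp: alphabet_def)
    moreover have "Dg n e k j \<notin> boundary_cells n"
      using 2 j n4 h by (intro nb) (auto simp: Dg_def alphabet_def hd)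
    ultimately show ?thesis using eq 2 by (auto simp: Dg_def)
  next
    case 3
    have "e j \<in> boundary_cells n" using j 3 by (intro e_bc) (auto simp: alphabet_def)
    moreover have "Dg n e k i \<notin> boundary_cells n"
      using 3 i n4 h by (intro nb) (auto simp: Dg_def alphabet_def hd)
    ultimately show ?thesis using eq 3 by (auto simp: Dg_def)
  next
    case 4
    have Di: "Dg n e k i = (if i \<le> 9*h - 5 then (h + (i - (8*h-3)), 1) else (i - (9*h-4)+1, if k=1 then 2 else 1))"
      using 4 h by (simp add: Dg_def hd)
    have Dj: "Dg n e k j = (if j \<le> 9*h - 5 then (h + (j - (8*h-3)), 1) else (j - (9*h-4)+1, if k=1 then 2 else 1))"
      using 4 h by (simp add: Dg_def hd)
    have ii: "8*h-4 < i" "i \<le> 10*h-6" using 4 i h by (auto simp: alphabet_def)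
    have jj: "8*h-4 < j" "j \<le> 10*h-6" using 4 j h by (auto simp: alphabet_def)
    have fi: "fst (Dg n e k i) = (if i \<le> 9*h - 5 then h + (i - (8*h-3)) else i - (9*h-4)+1)"
      using Di by simp
    have fj: "fst (Dg n e k j) = (if j \<le> 9*h - 5 then h + (j - (8*h-3)) else j - (9*h-4)+1)"
      using Dj by simp
    have si: "i \<le> 9*h - 5 \<Longrightarrow> snd (Dg n e k i) = 1" "\<not> i \<le> 9*h - 5 \<Longrightarrow> snd (Dg n e k i) = (if k=1 then 2 else 1)"
      using Di by simp_all
    have sj: "j \<le> 9*h - 5 \<Longrightarrow> snd (Dg n e k j) = 1" "\<not> j \<le> 9*h - 5 \<Longrightarrow> snd (Dg n e k j) = (if k=1 then 2 else 1)"
      using Dj by simp_all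
    have f: "fst (Dg n e k i) = fst (Dg n e k j)" using eq by simp
    have hh: "h \<ge> 2" using n4 h by simp
    have ii': "8*h-3 \<le> i" "8*h-3 \<le> j" using ii jj hh by presburger+
    show ?thesis
    proof (cases "i \<le> 9*h-5"; cases "j \<le> 9*h-5")
      assume a: "i \<le> 9*h-5" "j \<le> 9*h-5" 
      then have "i - (8*h-3) = j - (8*h-3)" using f fi fj by auto
      then show ?thesis using ii' eq_diff_iff by blast
    next
      assume a: "i \<le> 9*h-5" "\<not> j \<le> 9*h-5"
      then have "h \<le> fst (Dg n e k i)" "fst (Dg n e k j) < h" using fi fj ii jj by auto
      then show ?thesis using f by simp
    next
      assume a: "\<not> i \<le> 9*h-5" "j \<le> 9*h-5" 
      then have "h \<le> fst (Dg n e k j)" "fst (Dg n e k i) < h" using fi fj ii jj by auto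
      then show ?thesis using f by simp
    next
      assume a: "\<not> i \<le> 9*h-5" "\<not> j \<le> 9*h-5" 
      then have "i - (9*h-4) = j - (9*h-4)" using f fi fj by auto
      moreover have "9*h-4 \<le> i" "9*h-4 \<le> j" using a hh by linarith+
      ultimately show ?thesis using eq_diff_iff by blast
    qed
  qed
qed


lemma npos: "real n > 0" using n4 by simp

lemma phi_formula: "phi n e \<eta> w x = (1 / real n ^ length w) *\<^sub>R x +
   (real (fst (G n e \<eta> w)) / real n ^ length w, real (snd (G n e \<eta> w)) / real n ^ length w)"
proof (induction w arbitrary: x rule: rev_induct)
  case Nil show ?case by (simp add: phi_Nil G_Nil zero_prod_def)
next
  case (snoc j w)
  have "phi n e \<eta> (w@[j]) x = phi n e \<eta> w (psi n e (\<eta> w) j x)" by (simp add: phi_snoc)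
  also have "\<dots> = (1 / real n ^ length w) *\<^sub>R (psi n e (\<eta> w) j x) +
   (real (fst (G n e \<eta> w)) / real n ^ length w, real (snd (G n e \<eta> w)) / real n ^ length w)"
    by (rule snoc.IH)
  finally show ?case using npos
    by (simp add: psi_def psi_off_Dg G_snoc prod_eq_iff field_simps)
qed

lemma nat_lt_aux: "(a::nat) < P \<Longrightarrow> d < n \<Longrightarrow> n*a + d < n*P"
proof -
  assume "a < P" "d < n"
  then have "n*(a+1) \<le> n*P" by (intro mult_le_mono2) simp
  then show ?thesis using \<open>d < n\<close> by simp
qed

lemma G_lt: "set w \<subseteq> alphabet n \<Longrightarrow> fst (G n e \<eta> w) < n ^ length w \<and> snd (G n e \<eta> w) < n ^ length w"
proof (induction w rule: rev_induct)
  case Nil then show ?case by (simp add: G_Nil)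
next
  case (snoc j w)
  then have "fst (G n e \<eta> w) < n ^ length w \<and> snd (G n e \<eta> w) < n ^ length w" "j \<in> alphabet n" by auto
  then show ?case using Dg_lt[of j "\<eta> w"] by (simp add: G_snoc nat_lt_aux)
qed

lemma divmod_aux: "(d::nat) < n \<Longrightarrow> d' < n \<Longrightarrow> n*a+d = n*a'+d' \<Longrightarrow> a = a' \<and> d = d'"
proof -
  assume a: "d < n" "d' < n" "n*a+d = n*a'+d'"
  have "a = (n*a+d) div n" using a(1) by simp
  also have "\<dots> = (n*a'+d') div n" using a(3) by simp
  also have "\<dots> = a'" using a(2) by simp
  finally have aa: "a = a'" .
  then show ?thesis using a(3) by simp
qed

lemma G_inj: "inj_on (G n e \<eta>) (lv n m)"
proof (induction m)
  case 0
  then show ?case by (auto simp: lv_def inj_on_def)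
next
  case (Suc m)
  show ?case
  proof
    fix w w' assume w: "w \<in> lv n (Suc m)" and w': "w' \<in> lv n (Suc m)" and eq: "G n e \<eta> w = G n e \<eta> w'"
    obtain v j where v: "w = v @ [j]" using w by (cases w rule: rev_cases) (auto simp: lv_def)
    obtain v' j' where v': "w' = v' @ [j']" using w' by (cases w' rule: rev_cases) (auto simp: lv_def)
    have vl: "v \<in> lv n m" "v' \<in> lv n m" "j \<in> alphabet n" "j' \<in> alphabet n"
      using w w' v v' by (auto simp: lv_def)
    have e1: "n * fst (G n e \<eta> v) + fst (Dg n e (\<eta> v) j) = n * fst (G n e \<eta> v') + fst (Dg n e (\<eta> v') j')"
         "n * snd (G n e \<eta> v) + snd (Dg n e (\<eta> v) j) = n * snd (G n e \<eta> v') + snd (Dg n e (\<eta> v') j')"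
      using eq v v' by (simp_all add: G_snoc prod_eq_iff)
    have d1: "fst (G n e \<eta> v) = fst (G n e \<eta> v') \<and> fst (Dg n e (\<eta> v) j) = fst (Dg n e (\<eta> v') j')"
      using Dg_lt[OF vl(3), of "\<eta> v"] Dg_lt[OF vl(4), of "\<eta> v'"] e1(1)
      by (intro divmod_aux) auto
    have d2: "snd (G n e \<eta> v) = snd (G n e \<eta> v') \<and> snd (Dg n e (\<eta> v) j) = snd (Dg n e (\<eta> v') j')"
      using Dg_lt[OF vl(3), of "\<eta> v"] Dg_lt[OF vl(4), of "\<eta> v'"] e1(2)
      by (intro divmod_aux) auto
    have "G n e \<eta> v = G n e \<eta> v'" using d1 d2 by (simp add: prod_eq_iff)
    then have "v = v'" using Suc.IH vl by (auto simp: inj_on_def)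
    moreover have "Dg n e (\<eta> v) j = Dg n e (\<eta> v) j'" using d1 d2 \<open>v = v'\<close> by (simp add: prod_eq_iff)
    then have "j = j'" using Dg_inj vl by (auto simp: inj_on_def)
    ultimately show "w = w'" using v v' by simp
  qed
qed

lemma cell_mem: assumes "y \<in> cell n e \<eta> w"
  shows "real (fst (G n e \<eta> w)) \<le> real n ^ length w * fst y \<and> real n ^ length w * fst y \<le> real (fst (G n e \<eta> w)) + 1
       \<and> real (snd (G n e \<eta> w)) \<le> real n ^ length w * snd y \<and> real n ^ length w * snd y \<le> real (snd (G n e \<eta> w)) + 1"
proof -
  obtain x where x: "x \<in> unit_square" "y = phi n e \<eta> w x" using assms by (auto simp: cell_def)
  have P: "real n ^ length w > 0" using npos by simp
  have "real n ^ length w * fst y = fst x + real (fst (G n e \<eta> w))"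
       "real n ^ length w * snd y = snd x + real (snd (G n e \<eta> w))"
    using x(2) P by (simp_all add: phi_formula field_simps)
  then show ?thesis using x(1) by (auto simp: unit_square_def)
qed

lemma phi_eq_fun: "phi n e \<eta> w = (\<lambda>x. (1 / real n ^ length w) *\<^sub>R x +
   (real (fst (G n e \<eta> w)) / real n ^ length w, real (snd (G n e \<eta> w)) / real n ^ length w))"
  using phi_formula by blast

lemma compact_unit: "compact unit_square"
  unfolding unit_square_def by (intro compact_Times compact_Icc)

lemma cell_compact: "compact (cell n e \<eta> w)"
  unfolding cell_def phi_eq_fun
  by (intro compact_continuous_image compact_unit continuous_intros)

lemma cell_bounded: "bounded (cell n e \<eta> w)"
  using cell_compact compact_imp_bounded by blast

lemma cell_diam: "diameter (cell n e \<eta> w) \<le> 2 / real n ^ length w"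
proof (rule diameter_le)
  show "cell n e \<eta> w \<noteq> {} \<or> 0 \<le> 2 / real n ^ length w" by simp
  fix x y assume x: "x \<in> cell n e \<eta> w" and y: "y \<in> cell n e \<eta> w"
  have P: "real n ^ length w > 0" using npos by simp
  have "\<bar>real n ^ length w * fst x - real n ^ length w * fst y\<bar> \<le> 1"
       "\<bar>real n ^ length w * snd x - real n ^ length w * snd y\<bar> \<le> 1"
    using cell_mem[OF x] cell_mem[OF y] by linarith+
  then have "real n ^ length w * \<bar>fst x - fst y\<bar> \<le> 1" "real n ^ length w * \<bar>snd x - snd y\<bar> \<le> 1"
    using P by (simp_all add: right_diff_distrib[symmetric] abs_mult)
  then have "\<bar>fst x - fst y\<bar> \<le> 1 / real n ^ length w" "\<bar>snd x - snd y\<bar> \<le> 1 / real n ^ length w"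
    using P by (metis mult.commute pos_le_divide_eq)+
  moreover have "norm (x - y) \<le> \<bar>fst x - fst y\<bar> + \<bar>snd x - snd y\<bar>"
  proof -
    have "norm (x - y) = norm (fst x - fst y, snd x - snd y)" by (cases x, cases y) simp
    then show ?thesis using norm_Pair_le[of "fst x - fst y" "snd x - snd y"] by simp
  qed
  ultimately show "norm (x - y) \<le> 2 / real n ^ length w" by simp
qed

lemma psi_unit: "j \<in> alphabet n \<Longrightarrow> psi n e k j ` unit_square \<subseteq> unit_square"
proof
  fix y assume j: "j \<in> alphabet n" and "y \<in> psi n e k j ` unit_square"
  then obtain x where x: "x \<in> unit_square" "y = psi n e k j x" by auto
  have d: "real (fst (Dg n e k j)) + 1 \<le> real n" "real (snd (Dg n e k j)) + 1 \<le> real n"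
    using Dg_lt[OF j, of k] by linarith+
  have "fst y = (fst x + real (fst (Dg n e k j))) / real n" "snd y = (snd x + real (snd (Dg n e k j))) / real n"
    using x(2) npos by (simp_all add: psi_def psi_off_Dg field_simps)
  then have "real n * fst y = fst x + real (fst (Dg n e k j))" "real n * snd y = snd x + real (snd (Dg n e k j))"
    using npos by simp_all
  then have "real n * 0 \<le> real n * fst y" "real n * fst y \<le> real n * 1"
            "real n * 0 \<le> real n * snd y" "real n * snd y \<le> real n * 1"
    using x(1) d by (auto simp: unit_square_def)
  then have "0 \<le> fst y" "fst y \<le> 1" "0 \<le> snd y" "snd y \<le> 1"
    using npos mult_le_cancel_left_pos by blast+
  then show "y \<in> unit_square" by (auto simp: unit_square_def mem_Times_iff)
qed

lemma cell_snoc: "j \<in> alphabet n \<Longrightarrow> cell n e \<eta> (w@[j]) \<subseteq> cell n e \<eta> w"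
  unfolding cell_def phi_snoc image_comp[symmetric] using psi_unit by (meson image_mono)

lemma cell_take: "set u \<subseteq> alphabet n \<Longrightarrow> cell n e \<eta> u \<subseteq> cell n e \<eta> (take k u)"
proof (induction u rule: rev_induct)
  case Nil then show ?case by simp
next
  case (snoc j v)
  show ?case
  proof (cases "k \<le> length v")
    case True
    then have "take k (v@[j]) = take k v" by simp
    then show ?thesis using snoc cell_snoc[of j \<eta> v] by auto
  next
    case False
    then show ?thesis by simp
  qed
qed

definition "p0 = (real (fst (e 1)) / (real n - 1), real (snd (e 1)) / (real n - 1))"

lemma psi_fix: "psi n e k 1 p0 = p0"
proof -
  have "real n - 1 > 0" using n4 by simp
  moreover have o: "psi_off n e k 1 = (real (fst (e 1))/real n, real (snd (e 1))/real n)"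
  proof -
    have "(1::nat) \<le> 4*n-4" using n4 by simp
    then show ?thesis by (simp add: psi_off_def)
  qed
  ultimately show ?thesis using npos n4 by (simp add: psi_def o p0_def prod_eq_iff field_simps)
qed

lemma p0_unit: "p0 \<in> unit_square"
proof -
  have "e 1 \<in> boundary_cells n" using n4 by (intro e_bc) auto
  then have "fst (e 1) < n" "snd (e 1) < n" by (auto simp: boundary_cells_def)
  then have "real (fst (e 1)) \<le> real n - 1" "real (snd (e 1)) \<le> real n - 1" by linarith+
  moreover have "real n - 1 > 0" using n4 by simp
  ultimately show ?thesis by (auto simp: p0_def unit_square_def mem_Times_iff)
qed

lemma phi_rep: "phi n e \<eta> (u @ replicate j 1) p0 = phi n e \<eta> u p0"
proof (induction j)
  case 0 then show ?case by simp
next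
  case (Suc j)
  have eq: "u @ replicate (Suc j) 1 = (u @ replicate j 1) @ [1]" by (simp add: replicate_append_same)
  have "phi n e \<eta> (u @ replicate (Suc j) 1) p0 = phi n e \<eta> ((u @ replicate j 1) @ [1]) p0"
    using eq by metis
  also have "\<dots> = phi n e \<eta> (u @ replicate j 1) p0" by (simp only: phi_snoc comp_def psi_fix)
  finally show ?case using Suc by simp
qed

lemma one_alpha: "1 \<in> alphabet n" using n4 by (simp add: alphabet_def)

lemma K_point: assumes "set u \<subseteq> alphabet n"
  shows "phi n e \<eta> u p0 \<in> K n e \<eta> \<inter> cell n e \<eta> u"
proof -
  have c: "phi n e \<eta> u p0 \<in> cell n e \<eta> u" using p0_unit by (simp add: cell_def)
  have "phi n e \<eta> u p0 \<in> (\<Union>w \<in> lv n m. cell n e \<eta> w)" for m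
  proof (cases "m \<le> length u")
    case True
    then have "take m u \<in> lv n m" using assms by (auto simp: lv_def dest: in_set_takeD)
    then show ?thesis using c cell_take[OF assms, of \<eta> m] by blast
  next
    case False
    let ?u = "u @ replicate (m - length u) 1"
    have "?u \<in> lv n m" using False assms one_alpha by (auto simp: lv_def)
    moreover have "phi n e \<eta> u p0 \<in> cell n e \<eta> ?u"
      using phi_rep[of \<eta> u "m - length u"] p0_unit by (auto simp: cell_def intro!: image_eqI[of _ _ p0])
    ultimately show ?thesis by blast
  qed
  then show ?thesis using c by (simp add: K_lv)
qed

lemma K_closed: "closed (K n e \<eta>)"
  unfolding K_lv by (intro closed_INT ballI closed_UN finite_lv compact_imp_closed cell_compact)



lemma count16:
  assumes "\<forall>y\<in>S. \<bar>fst y - fst z\<bar> \<le> 1 / real n ^ k \<and> \<bar>snd y - snd z\<bar> \<le> 1 / real n ^ k"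
  shows "card {w \<in> lv n k. cell n e \<eta> w \<inter> S \<noteq> {}} \<le> 16"
proof -
  define W where "W = {w \<in> lv n k. cell n e \<eta> w \<inter> S \<noteq> {}}"
  define P where "P = real n ^ k"
  have P: "P > 0" using npos by (simp add: P_def)
  define a where "a = nat \<lceil>P * fst z - 2\<rceil>"
  define b where "b = nat \<lceil>P * snd z - 2\<rceil>"
  have key: "c \<ge> nat \<lceil>t - 2\<rceil> \<and> c < nat \<lceil>t - 2\<rceil> + 4"
    if "real c \<ge> t - 2" "real c \<le> t + 1" for c :: nat and t :: real
  proof -
    have "\<lceil>t - 2\<rceil> \<le> int c" using that(1) by (intro ceiling_le) simp
    moreover have "real c < real_of_int \<lceil>t - 2\<rceil> + 4" using that(2) le_of_int_ceiling[of "t-2"] by linarith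
    then have "int c < \<lceil>t - 2\<rceil> + 4" by linarith
    ultimately show ?thesis by linarith
  qed
  have sub: "G n e \<eta> ` W \<subseteq> {a..<a+4} \<times> {b..<b+4}"
  proof
    fix g assume "g \<in> G n e \<eta> ` W"
    then obtain w y where w: "w \<in> W" "g = G n e \<eta> w" "y \<in> cell n e \<eta> w" "y \<in> S"
      by (auto simp: W_def)
    have cm: "real (fst g) \<le> P * fst y" "P * fst y \<le> real (fst g) + 1"
             "real (snd g) \<le> P * snd y" "P * snd y \<le> real (snd g) + 1"
      using cell_mem[OF w(3)] w(1,2) by (auto simp: P_def W_def lv_def)
    have "\<bar>fst y - fst z\<bar> \<le> 1 / P" "\<bar>snd y - snd z\<bar> \<le> 1 / P" using assms w(4) by (auto simp: P_def)
    then have "P * \<bar>fst y - fst z\<bar> \<le> 1" "P * \<bar>snd y - snd z\<bar> \<le> 1"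
      using P by (metis mult.commute pos_le_divide_eq)+
    then have "\<bar>P * fst y - P * fst z\<bar> \<le> 1" "\<bar>P * snd y - P * snd z\<bar> \<le> 1"
      using P by (simp_all add: right_diff_distrib[symmetric] abs_mult)
    then have "fst g \<ge> a \<and> fst g < a + 4" "snd g \<ge> b \<and> snd g < b + 4"
      unfolding a_def b_def using cm by (intro key; linarith)+
    then show "g \<in> {a..<a+4} \<times> {b..<b+4}" by (auto simp: mem_Times_iff)
  qed
  have "inj_on (G n e \<eta>) W" using G_inj[of \<eta> k] by (rule inj_on_subset) (auto simp: W_def)
  then have "card W \<le> card ({a..<a+4} \<times> {b..<b+4})"
    using sub by (rule card_inj_on_le) simp
  then show ?thesis by (simp add: W_def card_cartesian_product)
qed


lemma count_ext:
  assumes "k \<le> L" "S \<subseteq> lv n k"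
  shows "card {u \<in> lv n L. take k u \<in> S} \<le> card S * (5*n-6) ^ (L-k)"
proof -
  have fS: "finite S" using assms(2) finite_lv finite_subset by blast
  have "inj_on (\<lambda>u. (take k u, drop k u)) {u \<in> lv n L. take k u \<in> S}"
    by (rule inj_onI) (metis append_take_drop_id prod.inject)
  moreover have "(\<lambda>u. (take k u, drop k u)) ` {u \<in> lv n L. take k u \<in> S} \<subseteq> S \<times> lv n (L-k)"
    by (auto simp: lv_def dest: in_set_dropD)
  ultimately have "card {u \<in> lv n L. take k u \<in> S} \<le> card (S \<times> lv n (L-k))"
    using fS finite_lv by (intro card_inj_on_le) auto
  then show ?thesis by (simp add: card_cartesian_product card_lv)
qed

lemma count_T:
  assumes "w \<in> lv n M" "M \<le> L"
  shows "(5*n-6) ^ (L-M) \<le> card {u \<in> lv n L. take M u = w}"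
proof -
  have "inj_on (\<lambda>t. w @ t) (lv n (L-M))" by (rule inj_onI) simp
  moreover have "(\<lambda>t. w @ t) ` lv n (L-M) \<subseteq> {u \<in> lv n L. take M u = w}"
    using assms by (auto simp: lv_def)
  moreover have "finite {u \<in> lv n L. take M u = w}" using finite_lv by simp
  ultimately have "card (lv n (L-M)) \<le> card {u \<in> lv n L. take M u = w}"
    by (intro card_inj_on_le)
  then show ?thesis by (simp add: card_lv)
qed

lemma Npos: "real (5*n-6) > 1" using n4 by simp

lemma alpha_pos: "alpha n > 0"
proof -
  have "ln (real (5*n-6)) > 0" using Npos by simp
  moreover have "ln (real n) > 0" using n4 by simp
  ultimately show ?thesis by (simp add: alpha_def)
qed

lemma n_powr: "real n powr alpha n = real (5*n-6)"
proof -
  have "ln (real n) > 0" using n4 by simp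
  then have "real n powr alpha n = exp (ln (real (5*n-6)))"
    using npos by (simp add: powr_def alpha_def)
  then show ?thesis using Npos by simp
qed

lemma q_powr: "(1 / real n ^ k) powr alpha n = 1 / real (5*n-6) ^ k"
  using npos by (simp add: powr_divide pow_powr n_powr)

lemma level_exists: assumes "0 < t" "t \<le> 1" shows "\<exists>k. 1 / real n ^ Suc k < t \<and> t \<le> 1 / real n ^ k"
proof -
  have ex: "\<exists>k. 1 / real n ^ k < t"
  proof -
    obtain k where "(1 / real n) ^ k < t" using real_arch_pow_inv[OF assms(1), of "1 / real n"] n4 by auto
    then show ?thesis by (auto simp: power_divide)
  qed
  define k0 where "k0 = (LEAST k. 1 / real n ^ k < t)"
  have k0: "1 / real n ^ k0 < t" unfolding k0_def using ex by (rule LeastI_ex)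
  have "k0 \<noteq> 0" proof assume "k0 = 0" then show False using k0 assms by simp qed
  then obtain k where k: "k0 = Suc k" by (cases k0) auto
  have "\<not> 1 / real n ^ k < t" using not_less_Least[of k "\<lambda>k. 1 / real n ^ k < t"] k k0_def by simp
  then show ?thesis using k0 k by auto
qed


lemma fst_snd_dist: "\<bar>fst y - fst z\<bar> \<le> dist z y \<and> \<bar>snd y - snd z\<bar> \<le> dist z y"
  using dist_fst_le[of z y] dist_snd_le[of z y] by (simp add: dist_real_def abs_minus_commute)

lemma upper_core:
  assumes x: "x \<in> K n e \<eta>" and r: "0 < r" "r \<le> 1 / real n ^ m" "1 / real n ^ Suc m < r" and d: "0 < \<delta>"
  shows "hausdorff_pre (alpha n) \<delta> (K n e \<eta> \<inter> cball x r) \<le> ennreal (16 * 2 powr alpha n * real (5*n-6) * r powr alpha n)"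
proof -
  define N where "N = real (5*n-6)"
  define a where "a = alpha n"
  have N1: "N > 1" using Npos by (simp add: N_def)
  have a0: "a > 0" using alpha_pos by (simp add: a_def)
  obtain k where k: "1 / real n ^ Suc k < min 1 (\<delta>/2)"
    using level_exists[of "min 1 (\<delta>/2)"] d by auto
  define j where "j = Suc k"
  define M where "M = m + j"
  have "1 / real n ^ M \<le> 1 / real n ^ j"
    using npos n4 by (intro divide_left_mono power_increasing) (auto simp: M_def)
  then have hM: "2 / real n ^ M \<le> \<delta>" using k by (simp add: j_def)
  define V where "V = {v \<in> lv n m. cell n e \<eta> v \<inter> cball x r \<noteq> {}}"
  have cV: "card V \<le> 16" unfolding V_def
  proof (rule count16)
    show "\<forall>y\<in>cball x r. \<bar>fst y - fst x\<bar> \<le> 1 / real n ^ m \<and> \<bar>snd y - snd x\<bar> \<le> 1 / real n ^ m"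
    proof
      fix y assume "y \<in> cball x r"
      then have "dist x y \<le> r" by (simp add: mem_cball)
      then show "\<bar>fst y - fst x\<bar> \<le> 1 / real n ^ m \<and> \<bar>snd y - snd x\<bar> \<le> 1 / real n ^ m"
        using fst_snd_dist[of y x] r(2) by linarith
    qed
  qed
  define Us where "Us = {u \<in> lv n M. take m u \<in> V}"
  have "card Us \<le> card V * (5*n-6) ^ (M-m)" unfolding Us_def
    by (rule count_ext) (auto simp: M_def V_def)
  moreover have "card V * (5*n-6) ^ (M-m) \<le> 16 * (5*n-6) ^ (M-m)" using cV by (rule mult_le_mono1)
  ultimately have "card Us \<le> 16 * (5*n-6) ^ (M-m)" by (rule order_trans)
  then have "card Us \<le> 16 * (5*n-6) ^ j" by (simp add: M_def)
  then have "real (card Us) \<le> real (16 * (5*n-6) ^ j)" by (rule of_nat_mono)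
  then have cU: "real (card Us) \<le> 16 * N ^ j" by (simp add: N_def)
  have fU: "finite Us" unfolding Us_def using finite_lv by simp
  have cover: "K n e \<eta> \<inter> cball x r \<subseteq> (\<Union>u\<in>Us. cell n e \<eta> u)"
  proof
    fix y assume y: "y \<in> K n e \<eta> \<inter> cball x r"
    then obtain u where u: "u \<in> lv n M" "y \<in> cell n e \<eta> u" by (auto simp: K_lv)
    have "y \<in> cell n e \<eta> (take m u)" using cell_take[of u \<eta> m] u by (auto simp: lv_def)
    moreover have "take m u \<in> lv n m" using u by (auto simp: lv_def M_def dest: in_set_takeD)
    ultimately have "take m u \<in> V" using y by (auto simp: V_def)
    then show "y \<in> (\<Union>u\<in>Us. cell n e \<eta> u)" using u by (auto simp: Us_def)
  qed
  have bd: "\<forall>u\<in>Us. bounded (cell n e \<eta> u) \<and> diameter (cell n e \<eta> u) \<le> \<delta>"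
    using cell_bounded cell_diam hM by (auto simp: Us_def lv_def intro: order_trans[OF cell_diam])
  have "hausdorff_pre a \<delta> (K n e \<eta> \<inter> cball x r) \<le> ennreal (\<Sum>u\<in>Us. diameter (cell n e \<eta> u) powr a)"
    by (rule pre_le_finite[OF fU cover bd]) (use d in simp)
  also have "(\<Sum>u\<in>Us. diameter (cell n e \<eta> u) powr a) \<le> (\<Sum>u\<in>Us. (2 / real n ^ M) powr a)"
  proof (rule sum_mono)
    fix u assume "u \<in> Us"
    then have "diameter (cell n e \<eta> u) \<le> 2 / real n ^ M" using cell_diam by (auto simp: Us_def lv_def)
    moreover have "0 \<le> diameter (cell n e \<eta> u)" using cell_bounded diameter_ge_0 by blast
    ultimately show "diameter (cell n e \<eta> u) powr a \<le> (2 / real n ^ M) powr a"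
      using a0 by (intro powr_mono2) auto
  qed
  also have "\<dots> = real (card Us) * (2 powr a / N ^ M)"
  proof -
    have "(2 / real n ^ M) powr a = 2 powr a * (1 / real n ^ M) powr a"
      by (simp add: powr_mult[symmetric])
    also have "\<dots> = 2 powr a / N ^ M" by (simp add: a_def N_def q_powr)
    finally show ?thesis by simp
  qed
  also have "\<dots> \<le> 16 * N ^ j * (2 powr a / N ^ M)"
    using cU N1 by (intro mult_right_mono) auto
  also have "\<dots> = 16 * 2 powr a * (1 / N ^ m)"
    using N1 by (simp add: M_def power_add field_simps)
  also have "\<dots> \<le> 16 * 2 powr a * (N * r powr a)"
  proof -
    have "1 / N ^ m = N * (1 / N ^ Suc m)" using N1 by (simp add: field_simps)
    also have "\<dots> = N * (1 / real n ^ Suc m) powr a" unfolding a_def N_def q_powr ..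
    also have "\<dots> \<le> N * r powr a"
      using r(3) a0 N1 by (intro mult_left_mono powr_mono2) auto
    finally show ?thesis by (intro mult_left_mono) auto
  qed
  finally show ?thesis
    by (simp add: a_def N_def ennreal_leI mult.assoc)
qed

lemma lower_real:
  fixes U :: "nat \<Rightarrow> (real \<times> real) set"
  assumes w: "w \<in> lv n M" and cov: "K n e \<eta> \<inter> cell n e \<eta> w \<subseteq> (\<Union>i. U i)"
    and Ub: "\<forall>i. bounded (U i) \<and> diameter (U i) \<le> 1/3" and eps: "0 < \<epsilon>"
  shows "\<exists>F. finite F \<and> 1 / real (5*n-6) ^ M / (16 * real (5*n-6) * 2 powr alpha n)
            \<le> (\<Sum>i\<in>F. diameter (U i) powr alpha n) + \<epsilon>"
proof -
  define N where "N = real (5*n-6)"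
  define a where "a = alpha n"
  have N1: "N > 1" using Npos by (simp add: N_def)
  have a0: "a > 0" using alpha_pos by (simp add: a_def)
  define d where "d i = diameter (U i)" for i
  have d0: "0 \<le> d i" for i using Ub diameter_ge_0 unfolding d_def by blast
  define s where "s i = min (1/3) ((\<epsilon> / 2 ^ Suc i) powr (1/a))" for i :: nat
  have s0: "0 < s i" for i using eps by (simp add: s_def)
  have s_pow: "s i powr a \<le> \<epsilon> / 2 ^ Suc i" for i
  proof -
    have "s i powr a \<le> ((\<epsilon> / 2 ^ Suc i) powr (1/a)) powr a"
      using s0[of i] a0 by (intro powr_mono2) (auto simp: s_def)
    also have "\<dots> = \<epsilon> / 2 ^ Suc i" using a0 eps by (simp add: powr_powr)
    finally show ?thesis .
  qed
  define \<rho> where "\<rho> i = max (d i) (s i)" for i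
  have \<rho>0: "0 < \<rho> i" for i using s0[of i] by (simp add: \<rho>_def)
  have \<rho>1: "\<rho> i \<le> 1/3" for i
  proof -
    have "d i \<le> 1/3" using Ub by (simp add: d_def)
    moreover have "s i \<le> 1/3" by (simp add: s_def)
    ultimately show ?thesis by (simp add: \<rho>_def)
  qed
  define Op where "Op i = (\<Union>y\<in>U i. ball y (\<rho> i))" for i
  define A where "A = K n e \<eta> \<inter> cell n e \<eta> w"
  have cA: "compact A" unfolding A_def using compact_Int_closed[OF cell_compact K_closed, of \<eta> w \<eta>]
    by (simp add: Int_commute)
  have AO: "A \<subseteq> (\<Union>i\<in>UNIV. Op i)"
  proof
    fix y assume "y \<in> A"
    then obtain i where "y \<in> U i" using cov by (auto simp: A_def)
    then have "y \<in> Op i" using \<rho>0[of i] unfolding Op_def by (intro UN_I[of y]) auto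
    then show "y \<in> (\<Union>i\<in>UNIV. Op i)" by blast
  qed
  obtain F where F: "finite F" "A \<subseteq> (\<Union>i\<in>F. Op i)"
    using compactE_image[OF cA _ AO] by (metis open_UN open_ball Op_def subset_UNIV)
  have "\<forall>i. \<exists>k. 1 / real n ^ Suc k < 2 * \<rho> i \<and> 2 * \<rho> i \<le> 1 / real n ^ k"
  proof (intro allI level_exists)
    fix i show "0 < 2 * \<rho> i" using \<rho>0[of i] by simp
    show "2 * \<rho> i \<le> 1" using \<rho>1[of i] by linarith
  qed
  then obtain kf where kf: "\<forall>i. 1 / real n ^ Suc (kf i) < 2 * \<rho> i \<and> 2 * \<rho> i \<le> 1 / real n ^ (kf i)"
    using choice[of "\<lambda>i k. 1 / real n ^ Suc k < 2 * \<rho> i \<and> 2 * \<rho> i \<le> 1 / real n ^ k"] by blast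
  define S where "S i = {v \<in> lv n (kf i). cell n e \<eta> v \<inter> Op i \<noteq> {}}" for i
  have cS: "card (S i) \<le> 16" for i
    unfolding S_def
  proof (rule count16[where z = "SOME z. z \<in> U i"])
    show "\<forall>y\<in>Op i. \<bar>fst y - fst (SOME z. z \<in> U i)\<bar> \<le> 1 / real n ^ kf i \<and> \<bar>snd y - snd (SOME z. z \<in> U i)\<bar> \<le> 1 / real n ^ kf i"
    proof
      fix y assume "y \<in> Op i"
      then obtain y0 where y0: "y0 \<in> U i" "dist y0 y < \<rho> i" by (auto simp: Op_def)
      define z where "z = (SOME z. z \<in> U i)"
      have z: "z \<in> U i" unfolding z_def using y0(1) by (rule someI)
      have "dist z y0 \<le> d i" using diameter_bounded_bound[of "U i" z y0] Ub z y0(1) unfolding d_def by blast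
      then have "dist z y \<le> 2 * \<rho> i" using y0(2) dist_triangle[of z y y0] by (simp add: \<rho>_def)
      then have "dist z y \<le> 1 / real n ^ kf i" using kf by (meson order_trans)
      then show "\<bar>fst y - fst (SOME z. z \<in> U i)\<bar> \<le> 1 / real n ^ kf i \<and> \<bar>snd y - snd (SOME z. z \<in> U i)\<bar> \<le> 1 / real n ^ kf i"
        using fst_snd_dist[of y z] unfolding z_def by linarith
    qed
  qed
  define L where "L = Max (insert M (kf ` F))"
  have hML: "M \<le> L" using F(1) by (simp add: L_def)
  have kL: "i \<in> F \<Longrightarrow> kf i \<le> L" for i using F(1) by (simp add: L_def)
  define T where "T = {u \<in> lv n L. take M u = w}"
  define X where "X i = {u \<in> lv n L. take (kf i) u \<in> S i}" for i
  have TX: "T \<subseteq> (\<Union>i\<in>F. X i)"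
  proof
    fix u assume u: "u \<in> T"
    then have ua: "set u \<subseteq> alphabet n" "length u = L" by (auto simp: T_def lv_def)
    obtain y where y: "y \<in> K n e \<eta>" "y \<in> cell n e \<eta> u" using K_point[OF ua(1), of \<eta>] by blast
    have "y \<in> cell n e \<eta> w" using cell_take[OF ua(1), of \<eta> M] y(2) u by (auto simp: T_def)
    then have "y \<in> A" using y(1) by (simp add: A_def)
    then obtain i where i: "i \<in> F" "y \<in> Op i" using F(2) by blast
    have "y \<in> cell n e \<eta> (take (kf i) u)" using cell_take[OF ua(1), of \<eta> "kf i"] y(2) by auto
    moreover have "take (kf i) u \<in> lv n (kf i)" using ua kL[OF i(1)] by (auto simp: lv_def dest: in_set_takeD)
    ultimately have "take (kf i) u \<in> S i" using i(2) by (auto simp: S_def)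
    then show "u \<in> (\<Union>i\<in>F. X i)" using i(1) u by (auto simp: X_def T_def)
  qed
  have "(5*n-6) ^ (L-M) \<le> card T" unfolding T_def by (rule count_T[OF w hML])
  also have "card T \<le> card (\<Union>i\<in>F. X i)"
    using TX F(1) finite_lv by (intro card_mono) (auto simp: X_def)
  also have "\<dots> \<le> (\<Sum>i\<in>F. card (X i))" using F(1) by (rule card_UN_le)
  also have "\<dots> \<le> (\<Sum>i\<in>F. 16 * (5*n-6) ^ (L - kf i))"
  proof (rule sum_mono)
    fix i assume i: "i \<in> F"
    have "card (X i) \<le> card (S i) * (5*n-6) ^ (L - kf i)"
      unfolding X_def by (rule count_ext) (auto simp: kL[OF i] S_def)
    also have "\<dots> \<le> 16 * (5*n-6) ^ (L - kf i)" using cS by (rule mult_le_mono1)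
    finally show "card (X i) \<le> 16 * (5*n-6) ^ (L - kf i)" .
  qed
  finally have "real ((5*n-6) ^ (L-M)) \<le> real (\<Sum>i\<in>F. 16 * (5*n-6) ^ (L - kf i))" by (rule of_nat_mono)
  then have "N ^ (L-M) \<le> (\<Sum>i\<in>F. 16 * N ^ (L - kf i))" by (simp add: N_def)
  moreover have "N ^ (L-M) = N ^ L * (1 / N ^ M)" using N1 hML by (simp add: power_diff)
  moreover have "(\<Sum>i\<in>F. 16 * N ^ (L - kf i)) = N ^ L * (\<Sum>i\<in>F. 16 * (1 / N ^ kf i))"
    unfolding sum_distrib_left using N1 kL by (intro sum.cong) (auto simp: power_diff)
  ultimately have "N ^ L * (1 / N ^ M) \<le> N ^ L * (\<Sum>i\<in>F. 16 * (1 / N ^ kf i))" by simp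
  then have s1: "1 / N ^ M \<le> (\<Sum>i\<in>F. 16 * (1 / N ^ kf i))"
    by (rule mult_left_le_imp_le) (use N1 in simp)
  have hterm: "1 / N ^ k \<le> N * 2 powr a * (d i powr a + s i powr a)" 
    if "1 / real n ^ Suc k < 2 * \<rho> i" for i k
  proof -
    have "1 / N ^ k = N * (1 / N ^ Suc k)" using N1 by (simp add: field_simps)
    also have "\<dots> = N * (1 / real n ^ Suc k) powr a" unfolding a_def N_def q_powr ..
    also have "\<dots> \<le> N * (2 * \<rho> i) powr a"
      using that a0 N1 by (intro mult_left_mono powr_mono2) auto
    also have "\<dots> = N * 2 powr a * \<rho> i powr a" using \<rho>0[of i] by (simp add: powr_mult)
    also have "\<rho> i powr a \<le> d i powr a + s i powr a"
      by (auto simp: \<rho>_def max_def)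
    then have "N * 2 powr a * \<rho> i powr a \<le> N * 2 powr a * (d i powr a + s i powr a)"
      using N1 by (intro mult_left_mono) auto
    finally show ?thesis .
  qed
  have "(\<Sum>i\<in>F. 16 * (1 / N ^ kf i)) \<le> (\<Sum>i\<in>F. 16 * (N * 2 powr a * (d i powr a + s i powr a)))"
    using hterm kf by (intro sum_mono mult_left_mono) auto
  also have "\<dots> = 16 * N * 2 powr a * ((\<Sum>i\<in>F. d i powr a) + (\<Sum>i\<in>F. s i powr a))"
    by (simp add: sum_distrib_left sum.distrib algebra_simps)
  also have "(\<Sum>i\<in>F. s i powr a) \<le> \<epsilon>"
  proof -
    define I where "I = Suc (Max F)"
    have FI: "F \<subseteq> {..<I}" using F(1) by (auto simp: I_def less_Suc_eq_le)
    have "(\<Sum>i\<in>F. s i powr a) \<le> (\<Sum>i\<in>F. \<epsilon> / 2 ^ Suc i)" using s_pow by (rule sum_mono)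
    also have "\<dots> \<le> (\<Sum>i<I. \<epsilon> / 2 ^ Suc i)" using FI eps by (intro sum_mono2) auto
    also have "\<dots> = \<epsilon> * (\<Sum>i<I. 1 / 2 ^ Suc i)" by (simp add: sum_distrib_left)
    also have "\<dots> = \<epsilon> * (1 - 1 / 2 ^ I)" by (simp only: geo_sum)
    also have "\<dots> \<le> \<epsilon>" using eps by (simp add: mult_le_cancel_left1)
    finally show ?thesis .
  qed
  then have "16 * N * 2 powr a * ((\<Sum>i\<in>F. d i powr a) + (\<Sum>i\<in>F. s i powr a))
      \<le> 16 * N * 2 powr a * ((\<Sum>i\<in>F. d i powr a) + \<epsilon>)"
    using N1 by (intro mult_left_mono add_left_mono) auto
  finally have fin: "1 / N ^ M \<le> 16 * N * 2 powr a * ((\<Sum>i\<in>F. d i powr a) + \<epsilon>)" using s1 by linarith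
  then have "1 / N ^ M / (16 * N * 2 powr a) \<le> (\<Sum>i\<in>F. d i powr a) + \<epsilon>"
  proof -
    have K0: "0 < 16 * N * 2 powr a" using N1 by simp
    show ?thesis unfolding pos_divide_le_eq[OF K0] using fin by (metis mult.commute)
  qed
  then show ?thesis using F(1) by (auto simp: N_def a_def d_def)
qed

lemma lower_core:
  fixes U :: "nat \<Rightarrow> (real \<times> real) set"
  assumes w: "w \<in> lv n M" and cov: "K n e \<eta> \<inter> cell n e \<eta> w \<subseteq> (\<Union>i. U i)"
    and Ub: "\<forall>i. bounded (U i) \<and> diameter (U i) \<le> 1/3"
  shows "ennreal (1 / real (5*n-6) ^ M / (16 * real (5*n-6) * 2 powr alpha n))
           \<le> (\<Sum>i. ennreal (diameter (U i) powr alpha n))"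
proof (rule ennreal_le_epsilon)
  fix \<epsilon> :: real assume "0 < \<epsilon>"
  then obtain F where F: "finite F" "1 / real (5*n-6) ^ M / (16 * real (5*n-6) * 2 powr alpha n)
            \<le> (\<Sum>i\<in>F. diameter (U i) powr alpha n) + \<epsilon>"
    using lower_real[OF w cov Ub] by blast
  have e1: "ennreal (1 / real (5*n-6) ^ M / (16 * real (5*n-6) * 2 powr alpha n))
      \<le> ennreal ((\<Sum>i\<in>F. diameter (U i) powr alpha n) + \<epsilon>)" by (rule ennreal_leI) (rule F(2))
  have e2: "ennreal ((\<Sum>i\<in>F. diameter (U i) powr alpha n) + \<epsilon>) = ennreal (\<Sum>i\<in>F. diameter (U i) powr alpha n) + ennreal \<epsilon>"
    using \<open>0 < \<epsilon>\<close> by (intro ennreal_plus sum_nonneg) auto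
  have e3: "ennreal (\<Sum>i\<in>F. diameter (U i) powr alpha n) = (\<Sum>i\<in>F. ennreal (diameter (U i) powr alpha n))"
    by (rule sum_ennreal[symmetric]) simp
  have e4: "(\<Sum>i\<in>F. ennreal (diameter (U i) powr alpha n)) \<le> (\<Sum>i. ennreal (diameter (U i) powr alpha n))"
    using F(1) by (intro sum_le_suminf) auto
  have e5: "ennreal (\<Sum>i\<in>F. diameter (U i) powr alpha n) + ennreal \<epsilon> \<le> (\<Sum>i. ennreal (diameter (U i) powr alpha n)) + ennreal \<epsilon>"
    unfolding e3 using e4 by (rule add_right_mono)
  show "ennreal (1 / real (5*n-6) ^ M / (16 * real (5*n-6) * 2 powr alpha n))
           \<le> (\<Sum>i. ennreal (diameter (U i) powr alpha n)) + ennreal \<epsilon>"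
    using e1 e5 unfolding e2 by (rule order_trans)
qed

end

theorem proposition5p1:
  fixes n :: nat and e :: "nat \<Rightarrow> nat \<times> nat"
  assumes "n \<ge> 4" and "even n"
    and "bij_betw e {1..4*n-4} (boundary_cells n)"
  shows "\<exists>C > 1. \<forall>\<eta>. choice_fun n \<eta> \<longrightarrow>
           (\<forall>x \<in> K n e \<eta>. \<forall>r. 0 < r \<and> r < 1 / real n \<longrightarrow>
              ennreal (r powr alpha n / C) \<le> hausdorff_measure (alpha n) (K n e \<eta> \<inter> cball x r) \<and>
              hausdorff_measure (alpha n) (K n e \<eta> \<inter> cball x r) \<le> ennreal (C * r powr alpha n))"
proof -
  note as = assms
  define N where "N = real (5*n-6)"
  define a where "a = alpha n"
  have N1: "N > 1" using Npos[OF as] by (simp add: N_def)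
  have a0: "a > 0" using alpha_pos[OF as] by (simp add: a_def)
  have np: "real n > 0" using as(1) by simp
  define C where "C = 16 * N^2 * 4 powr a"
  have p4: "1 \<le> 4 powr a" using a0 by (intro ge_one_powr_ge_zero) auto
  have NN: "N \<le> N^2" using N1 by (simp add: power2_eq_square)
  have C1: "C > 1"
  proof -
    have "1 \<le> N^2" using N1 NN by linarith
    then have "16 \<le> 16 * N^2" by simp
    also have "\<dots> \<le> 16 * N^2 * 4 powr a" using p4 N1 by simp
    finally show ?thesis by (simp add: C_def)
  qed
  have 24: "2 powr a \<le> 4 powr a" using a0 by (intro powr_mono2) auto
  show ?thesis
  proof (intro exI[of _ C] conjI C1 allI impI ballI)
    fix \<eta> x r assume x: "x \<in> K n e \<eta>" and r: "0 < r \<and> r < 1 / real n"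
    have r1: "r \<le> 1"
    proof -
      have "1 / real n \<le> 1" using as(1) by simp
      then show ?thesis using r by linarith
    qed
    show "hausdorff_measure (alpha n) (K n e \<eta> \<inter> cball x r) \<le> ennreal (C * r powr alpha n)"
    proof (rule hm_le)
      fix \<delta> :: real assume d: "0 < \<delta>"
      obtain m where m: "1 / real n ^ Suc m < r" "r \<le> 1 / real n ^ m"
        using level_exists[OF as, of r] r r1 by auto
      have "hausdorff_pre (alpha n) \<delta> (K n e \<eta> \<inter> cball x r) \<le> ennreal (16 * 2 powr a * N * r powr a)"
        using upper_core[OF as x _ m(2) m(1) d] r by (simp add: a_def N_def)
      also have "\<dots> \<le> ennreal (C * r powr a)"
      proof (rule ennreal_leI)
        have "16 * 2 powr a * N \<le> 16 * 4 powr a * N^2"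
          using 24 NN N1 by (intro mult_mono) auto
        then have "16 * 2 powr a * N \<le> C" by (simp add: C_def mult_ac)
        then show "16 * 2 powr a * N * r powr a \<le> C * r powr a" by (rule mult_right_mono) simp
      qed
      finally show "hausdorff_pre (alpha n) \<delta> (K n e \<eta> \<inter> cball x r) \<le> ennreal (C * r powr alpha n)"
        by (simp add: a_def)
    qed
  next
    fix \<eta> x r assume x: "x \<in> K n e \<eta>" and r: "0 < r \<and> r < 1 / real n"
    have r1: "r \<le> 1"
    proof -
      have "1 / real n \<le> 1" using as(1) by simp
      then show ?thesis using r by linarith
    qed
    obtain M' where M': "1 / real n ^ Suc M' < r/2" "r/2 \<le> 1 / real n ^ M'"
      using level_exists[OF as, of "r/2"] r r1 by auto
    define M where "M = Suc M'"
    obtain w where w: "w \<in> lv n M" "x \<in> cell n e \<eta> w" using x by (auto simp: K_lv)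
    have sub: "cell n e \<eta> w \<subseteq> cball x r"
    proof
      fix y assume y: "y \<in> cell n e \<eta> w"
      have "dist x y \<le> diameter (cell n e \<eta> w)"
        using diameter_bounded_bound[OF cell_bounded[OF as] w(2) y] .
      also have "\<dots> \<le> 2 / real n ^ M" using cell_diam[OF as, of \<eta> w] w(1) by (simp add: lv_def)
      also have "\<dots> < r" using M'(1) by (simp add: M_def)
      finally show "y \<in> cball x r" by (simp add: mem_cball)
    qed
    define c where "c = 1 / N ^ M / (16 * N * 2 powr a)"
    have "ennreal c \<le> hausdorff_pre a (1/3) (K n e \<eta> \<inter> cball x r)"
    proof (rule pre_lower)
      fix U :: "nat \<Rightarrow> (real \<times> real) set"
      assume cov: "K n e \<eta> \<inter> cball x r \<subseteq> (\<Union>i. U i)" and Ub: "\<forall>i. bounded (U i) \<and> diameter (U i) \<le> 1/3"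
      have "K n e \<eta> \<inter> cell n e \<eta> w \<subseteq> (\<Union>i. U i)" using cov sub by blast
      from lower_core[OF as w(1) this Ub]
      show "ennreal c \<le> (\<Sum>i. ennreal (diameter (U i) powr a))" by (simp add: c_def N_def a_def)
    qed
    also have "\<dots> \<le> hausdorff_measure a (K n e \<eta> \<inter> cball x r)" by (rule hm_ge) simp
    finally have H: "ennreal c \<le> hausdorff_measure a (K n e \<eta> \<inter> cball x r)" .
    have "r powr a / C \<le> c"
    proof -
      have "r powr a = 2 powr a * (r/2) powr a" using r by (simp add: powr_mult[symmetric])
      also have "(r/2) powr a \<le> (1 / real n ^ M') powr a" using M'(2) r a0 by (intro powr_mono2) auto
      also have "(1 / real n ^ M') powr a = 1 / N ^ M'" unfolding a_def N_def q_powr[OF as] ..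
      also have "1 / N ^ M' = N * (1 / N ^ M)" using N1 by (simp add: M_def field_simps)
      finally have "r powr a \<le> 2 powr a * (N * (1 / N ^ M))" by (simp add: mult_left_mono)
      moreover have "4 powr a = 2 powr a * 2 powr a" by (simp add: powr_mult[symmetric])
      moreover have C': "C = 16 * N^2 * (2 powr a * 2 powr a)" using \<open>4 powr a = _\<close> by (simp add: C_def)
      ultimately have "r powr a / C \<le> (2 powr a * (N * (1 / N ^ M))) / C"
        using C1 by (intro divide_right_mono) auto
      also have "\<dots> = c" unfolding C' c_def using N1 by (simp add: power2_eq_square field_simps)
      finally show ?thesis .
    qed
    then have "ennreal (r powr a / C) \<le> ennreal c" by (rule ennreal_leI)
    with H show "ennreal (r powr alpha n / C) \<le> hausdorff_measure (alpha n) (K n e \<eta> \<inter> cball x r)"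
      by (simp add: a_def)
  qed
qed

end
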